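(* Let $Q$ be a complete quiver and $j$ a mutable vertex which is cycle-preserving for $Q$ and is not the apex of a vortex subquiver of $Q$. Then every oriented 3-cycle in $\mu_j(Q)$ contains $j$, and $\mu_j(Q)$ is vortex-free.
   Context: A quiver is a finite directed multigraph with no loops and no oriented 2-cycles, whose vertex set is partitioned into mutable and frozen vertices; arrows between two frozen vertices are ignored. $b_{ik}$ = number of arrows $i\to k$ minus number of arrows $k\to i$; $Q|_S$ is the induced subquiver on $S$. Mutation $\mu_j$ at mutable $j$: for each path $i\to j\to k$ add $b_{ij}b_{jk}$ arrows $i\to k$, reverse all arrows at $j$, cancel 2-cycles. A quiver is complete if there is at least one arrow between every pair of vertices at least one of which is mutable. A 3-vertex (sub)quiver is an oriented 3-cycle if it has at most one frozen vertex and its underlying directed graph is not acyclic. A mutable vertex $j$ is cycle-preserving for $Q$ if whenever $Q|_{\{i,j,k\}}$ is an oriented 3-cycle containing $j$, so is $\mu_j(Q)|_{\{i,j,k\}}$. A vortex is a quiver on four vertices, at least three of them mutable, in which one vertex (the apex) is a source or a sink and the other three vertices support an oriented cycle. A vertex is the apex of a vortex in $Q$ if it is the apex of some 4-vertex induced subquiver which is a vortex; $Q$ is vortex-free if no 4-vertex induced subquiver is a vortex. *)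

theory Defs
  imports Main
begin

text \<open>A quiver is encoded by its finite vertex set V, its set of mutable vertices
M (frozen vertices are V - M), and its exchange matrix b, where b i k is the number
of arrows i to k minus the number of arrows k to i.  Since quivers have no loops and
no oriented 2-cycles, this encodes the quiver exactly.  Entries between two frozen
vertices are irrelevant (such arrows are ignored) and none of the notions below
looks at them.\<close>

definition quiver :: "'a set \<Rightarrow> 'a set \<Rightarrow> ('a \<Rightarrow> 'a \<Rightarrow> int) \<Rightarrow> bool" where
  "quiver V M b \<longleftrightarrow> finite V \<and> M \<subseteq> V
     \<and> (\<forall>i k. b i k = - b k i)
     \<and> (\<forall>i k. b i k \<noteq> 0 \<longrightarrow> i \<in> V \<and> k \<in> V)"

definition arrows_on :: "('a \<Rightarrow> 'a \<Rightarrow> int) \<Rightarrow> 'a set \<Rightarrow> ('a \<times> 'a) set" where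
  "arrows_on b S = {(x, y). x \<in> S \<and> y \<in> S \<and> b x y > 0}"

text \<open>Mutation at j: for each path i -> j -> k add b_ij b_jk arrows i -> k,
reverse all arrows at j, cancel 2-cycles.\<close>
definition mutate :: "('a \<Rightarrow> 'a \<Rightarrow> int) \<Rightarrow> 'a \<Rightarrow> ('a \<Rightarrow> 'a \<Rightarrow> int)" where
  "mutate b j = (\<lambda>i k. if i = j \<or> k = j then - b i k
      else b i k + max 0 (b i j) * max 0 (b j k) - max 0 (b k j) * max 0 (b j i))"

definition complete_quiver :: "'a set \<Rightarrow> 'a set \<Rightarrow> ('a \<Rightarrow> 'a \<Rightarrow> int) \<Rightarrow> bool" where
  "complete_quiver V M b \<longleftrightarrow>
     (\<forall>i\<in>V. \<forall>k\<in>V. i \<noteq> k \<and> (i \<in> M \<or> k \<in> M) \<longrightarrow> b i k \<noteq> 0)"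

definition oriented_3cycle ::
  "'a set \<Rightarrow> 'a set \<Rightarrow> ('a \<Rightarrow> 'a \<Rightarrow> int) \<Rightarrow> 'a \<Rightarrow> 'a \<Rightarrow> 'a \<Rightarrow> bool" where
  "oriented_3cycle V M b i j k \<longleftrightarrow>
     distinct [i, j, k] \<and> {i, j, k} \<subseteq> V \<and> card ({i, j, k} - M) \<le> 1
     \<and> \<not> acyclic (arrows_on b {i, j, k})"

definition cycle_preserving :: "'a set \<Rightarrow> 'a set \<Rightarrow> ('a \<Rightarrow> 'a \<Rightarrow> int) \<Rightarrow> 'a \<Rightarrow> bool" where
  "cycle_preserving V M b j \<longleftrightarrow> j \<in> M \<and>
     (\<forall>i k. oriented_3cycle V M b i j k \<longrightarrow> oriented_3cycle V M (mutate b j) i j k)"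

definition source_or_sink_in :: "('a \<Rightarrow> 'a \<Rightarrow> int) \<Rightarrow> 'a set \<Rightarrow> 'a \<Rightarrow> bool" where
  "source_or_sink_in b S a \<longleftrightarrow>
     (\<forall>x\<in>S. \<not> b x a > 0) \<or> (\<forall>x\<in>S. \<not> b a x > 0)"

definition vortex_with_apex ::
  "'a set \<Rightarrow> 'a set \<Rightarrow> ('a \<Rightarrow> 'a \<Rightarrow> int) \<Rightarrow> 'a \<Rightarrow> 'a \<Rightarrow> 'a \<Rightarrow> 'a \<Rightarrow> bool" where
  "vortex_with_apex V M b a x y z \<longleftrightarrow>
     distinct [a, x, y, z] \<and> {a, x, y, z} \<subseteq> V \<and> card ({a, x, y, z} - M) \<le> 1
     \<and> source_or_sink_in b {a, x, y, z} a
     \<and> \<not> acyclic (arrows_on b {x, y, z})"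

definition is_vortex_apex :: "'a set \<Rightarrow> 'a set \<Rightarrow> ('a \<Rightarrow> 'a \<Rightarrow> int) \<Rightarrow> 'a \<Rightarrow> bool" where
  "is_vortex_apex V M b a \<longleftrightarrow> (\<exists>x y z. vortex_with_apex V M b a x y z)"

definition vortex_free :: "'a set \<Rightarrow> 'a set \<Rightarrow> ('a \<Rightarrow> 'a \<Rightarrow> int) \<Rightarrow> bool" where
  "vortex_free V M b \<longleftrightarrow> (\<forall>a x y z. \<not> vortex_with_apex V M b a x y z)"

end

theory Submission imports Defs begin

definition cyc3 :: "('a \<Rightarrow> 'a \<Rightarrow> int) \<Rightarrow> 'a \<Rightarrow> 'a \<Rightarrow> 'a \<Rightarrow> bool" where
  "cyc3 b x y z \<longleftrightarrow> (b x y > 0 \<and> b y z > 0 \<and> b z x > 0) \<or> (b x z > 0 \<and> b z y > 0 \<and> b y x > 0)"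

lemma acyc_rank:
  assumes "\<forall>(u,v)\<in>r. f u < (f v::nat)" shows "acyclic r"
proof -
  have "r \<subseteq> inv_image less_than f" using assms by auto
  then have "wf r" by (rule wf_subset[OF wf_inv_image[OF wf_less_than]])
  then show ?thesis by (rule wf_acyclic)
qed

lemma acyc_order:
  assumes "distinct [p,q,r]" "\<forall>u v. b u v = - b v u" "b q p \<le> 0" "b r p \<le> 0" "b r q \<le> 0"
  shows "acyclic (arrows_on b {p,q,r})"
proof (rule acyc_rank[where f="\<lambda>u. if u=p then 0 else if u=q then 1 else 2::nat"], clarify)
  fix u v assume "(u,v) \<in> arrows_on b {p,q,r}"
  then have "u \<in> {p,q,r}" "v \<in> {p,q,r}" "b u v > 0" by (auto simp: arrows_on_def)
  moreover have "b u u = 0" for u using spec[OF spec[OF assms(2), of u], of u] by simp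
  ultimately show "(if u=p then 0 else if u=q then 1 else 2::nat) < (if v=p then 0 else if v=q then 1 else 2)"
    using assms(1,3,4,5) by auto
qed

lemma cyc_iff:
  assumes "distinct [x,y,z]" "\<forall>u v. b u v = - b v u"
  shows "(\<not> acyclic (arrows_on b {x,y,z})) = cyc3 b x y z"
proof
  assume c: "cyc3 b x y z"
  show "\<not> acyclic (arrows_on b {x,y,z})"
  proof (cases "b x y > 0 \<and> b y z > 0 \<and> b z x > 0")
    case True
    then have "(x,y) \<in> arrows_on b {x,y,z}" "(y,z) \<in> arrows_on b {x,y,z}" "(z,x) \<in> arrows_on b {x,y,z}"
      by (auto simp: arrows_on_def)
    then have "(x,x) \<in> (arrows_on b {x,y,z})\<^sup>+" by (meson trancl.simps)
    then show ?thesis by (auto simp: acyclic_def)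
  next
    case False
    then have "b x z > 0 \<and> b z y > 0 \<and> b y x > 0" using c by (auto simp: cyc3_def)
    then have "(x,z) \<in> arrows_on b {x,y,z}" "(z,y) \<in> arrows_on b {x,y,z}" "(y,x) \<in> arrows_on b {x,y,z}"
      by (auto simp: arrows_on_def)
    then have "(x,x) \<in> (arrows_on b {x,y,z})\<^sup>+" by (meson trancl.simps)
    then show ?thesis by (auto simp: acyclic_def)
  qed
next
  assume na: "\<not> acyclic (arrows_on b {x,y,z})"
  show "cyc3 b x y z"
  proof (rule ccontr)
    assume nc: "\<not> cyc3 b x y z"
    have a: "b y x = - b x y" "b z y = - b y z" "b x z = - b z x" using assms(2) by metis+
    have "(b y x \<le> 0 \<and> b z x \<le> 0 \<and> b z y \<le> 0) \<or> (b z x \<le> 0 \<and> b y x \<le> 0 \<and> b y z \<le> 0)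
        \<or> (b x y \<le> 0 \<and> b z y \<le> 0 \<and> b z x \<le> 0) \<or> (b z y \<le> 0 \<and> b x y \<le> 0 \<and> b x z \<le> 0)
        \<or> (b x z \<le> 0 \<and> b y z \<le> 0 \<and> b y x \<le> 0) \<or> (b y z \<le> 0 \<and> b x z \<le> 0 \<and> b x y \<le> 0)"
      using nc a unfolding cyc3_def by linarith
    then show False
    proof (elim disjE)
      assume h: "b y x \<le> 0 \<and> b z x \<le> 0 \<and> b z y \<le> 0"
      have "acyclic (arrows_on b {x,y,z})" by (rule acyc_order[OF _ assms(2)]) (use h assms(1) in auto)
      then show False using na by simp
    next
      assume h: "b z x \<le> 0 \<and> b y x \<le> 0 \<and> b y z \<le> 0"
      have "{x,z,y} = {x,y,z}" by auto
      moreover have "acyclic (arrows_on b {x,z,y})" by (rule acyc_order[OF _ assms(2)]) (use h assms(1) in auto)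
      ultimately show False using na by simp
    next
      assume h: "b x y \<le> 0 \<and> b z y \<le> 0 \<and> b z x \<le> 0"
      have "{y,x,z} = {x,y,z}" by auto
      moreover have "acyclic (arrows_on b {y,x,z})" by (rule acyc_order[OF _ assms(2)]) (use h assms(1) in auto)
      ultimately show False using na by simp
    next
      assume h: "b z y \<le> 0 \<and> b x y \<le> 0 \<and> b x z \<le> 0"
      have "{y,z,x} = {x,y,z}" by auto
      moreover have "acyclic (arrows_on b {y,z,x})" by (rule acyc_order[OF _ assms(2)]) (use h assms(1) in auto)
      ultimately show False using na by simp
    next
      assume h: "b x z \<le> 0 \<and> b y z \<le> 0 \<and> b y x \<le> 0"
      have "{z,x,y} = {x,y,z}" by auto
      moreover have "acyclic (arrows_on b {z,x,y})" by (rule acyc_order[OF _ assms(2)]) (use h assms(1) in auto)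
      ultimately show False using na by simp
    next
      assume h: "b y z \<le> 0 \<and> b x z \<le> 0 \<and> b x y \<le> 0"
      have "{z,y,x} = {x,y,z}" by auto
      moreover have "acyclic (arrows_on b {z,y,x})" by (rule acyc_order[OF _ assms(2)]) (use h assms(1) in auto)
      ultimately show False using na by simp
    qed
  qed
qed


lemma cyc3_swap1: "cyc3 b x y z = cyc3 b y x z" unfolding cyc3_def by auto
lemma cyc3_swap2: "cyc3 b x y z = cyc3 b x z y" unfolding cyc3_def by auto

lemma mut_anti:
  assumes "\<forall>u v. b u v = - b v u"
  shows "\<forall>u v. mutate b j u v = - mutate b j v u"
proof (intro allI)
  fix u v
  have "b u v = - b v u" using assms by metis
  then show "mutate b j u v = - mutate b j v u" unfolding mutate_def by auto
qed

lemma mut_j1: "mutate b j j k = - b j k" by (simp add: mutate_def)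
lemma mut_j2: "mutate b j i j = - b i j" by (simp add: mutate_def)

lemma mut_path:
  assumes "\<forall>u v. b u v = - b v u" "i \<noteq> j" "k \<noteq> j" "b i j > 0" "b j k > 0"
  shows "mutate b j i k = b i k + b i j * b j k"
proof -
  have "b k j = - b j k" using assms(1) by metis
  then show ?thesis using assms(2-5) unfolding mutate_def by auto
qed

lemma mut_same:
  assumes "\<forall>u v. b u v = - b v u" "i \<noteq> j" "k \<noteq> j" "(b j i > 0 \<and> b j k > 0) \<or> (b j i < 0 \<and> b j k < 0)"
  shows "mutate b j i k = b i k"
proof -
  have "b k j = - b j k" "b i j = - b j i" using assms(1) by metis+
  then show ?thesis using assms(2-4) unfolding mutate_def by auto
qed

lemma pair_pos:
  assumes an: "\<forall>u v. b u v = - b v u" and d: "distinct [i,j,k]" and p: "b i j > 0" "b j k > 0"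
    and nz: "b i k \<noteq> 0" and cp: "cyc3 b i j k \<longrightarrow> cyc3 (mutate b j) i j k"
  shows "mutate b j i k > 0"
proof -
  have e: "mutate b j i k = b i k + b i j * b j k" using mut_path[OF an _ _ p] d by auto
  have pp: "b i j * b j k > 0" using p by simp
  show ?thesis
  proof (cases "b i k > 0")
    case True then show ?thesis using e pp by simp
  next
    case False
    then have "b i k < 0" using nz by simp
    moreover have "b k i = - b i k" using an by metis
    ultimately have "cyc3 b i j k" using p unfolding cyc3_def by simp
    then have "cyc3 (mutate b j) i j k" using cp by simp
    moreover have "mutate b j i j = - b i j" by (rule mut_j2)
    ultimately show ?thesis using p unfolding cyc3_def by auto
  qed
qed

lemma core_half:
  assumes an: "\<forall>u v. b u v = - b v u" and d: "distinct [a,j,y,z]" and nz: "b j a \<noteq> 0"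
    and c1: "mutate b j j y > 0" and c2: "mutate b j z j > 0"
    and ss: "source_or_sink_in (mutate b j) {a,j,y,z} a"
    and cpy: "cyc3 b j a y \<longrightarrow> cyc3 (mutate b j) j a y"
    and cpz: "cyc3 b j a z \<longrightarrow> cyc3 (mutate b j) j a z"
  shows False
proof -
  have a1: "b y j = - b j y" "b z j = - b j z" "b a j = - b j a" "b a y = - b y a" "b a z = - b z a"
    using an by metis+
  have byj: "b y j > 0" using c1 mut_j1[of b j y] a1 by simp
  have bjz: "b j z > 0" using c2 mut_j2[of b j z] a1 by simp
  from ss show False unfolding source_or_sink_in_def
  proof (elim disjE)
    assume h: "\<forall>x\<in>{a, j, y, z}. \<not> 0 < mutate b j x a"
    then have "mutate b j j a \<le> 0" by auto
    then have bja: "b j a > 0" using mut_j1[of b j a] nz by simp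
    have "mutate b j y a \<le> 0" using h by auto
    moreover have "mutate b j y a = b y a + b y j * b j a" using mut_path[OF an _ _ byj bja] d by auto
    moreover have "b y j * b j a > 0" using byj bja by simp
    ultimately have bay: "b a y > 0" using a1 by simp
    have "cyc3 b j a y" unfolding cyc3_def using bja bay byj by simp
    then have "cyc3 (mutate b j) j a y" using cpy by simp
    then show False unfolding cyc3_def using mut_j1[of b j a] bja \<open>mutate b j y a \<le> 0\<close> by auto
  next
    assume h: "\<forall>x\<in>{a, j, y, z}. \<not> 0 < mutate b j a x"
    then have "mutate b j a j \<le> 0" by auto
    then have baj: "b a j > 0" using mut_j2[of b j a] nz a1 by simp
    have "mutate b j a z \<le> 0" using h by auto
    moreover have "mutate b j a z = b a z + b a j * b j z" using mut_path[OF an _ _ baj bjz] d by auto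
    moreover have "b a j * b j z > 0" using baj bjz by simp
    ultimately have bza: "b z a > 0" using a1 by simp
    have "cyc3 b j a z" unfolding cyc3_def using baj bza bjz by simp
    then have "cyc3 (mutate b j) j a z" using cpz by simp
    then show False unfolding cyc3_def using mut_j1[of b j z] bjz \<open>mutate b j a z \<le> 0\<close> by auto
  qed
qed

lemma core:
  assumes an: "\<forall>u v. b u v = - b v u" and d: "distinct [a,j,y,z]" and nz: "b j a \<noteq> 0"
    and c: "cyc3 (mutate b j) j y z"
    and ss: "source_or_sink_in (mutate b j) {a,j,y,z} a"
    and cpy: "cyc3 b j a y \<longrightarrow> cyc3 (mutate b j) j a y"
    and cpz: "cyc3 b j a z \<longrightarrow> cyc3 (mutate b j) j a z"
  shows False
proof -
  from c consider "mutate b j j y > 0 \<and> mutate b j z j > 0" | "mutate b j j z > 0 \<and> mutate b j y j > 0"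
    unfolding cyc3_def by auto
  then show False
  proof cases
    case 1 then show ?thesis using core_half[OF an d nz _ _ ss cpy cpz] by simp
  next
    case 2
    have d2: "distinct [a,j,z,y]" using d by auto
    have "{a,j,z,y} = {a,j,y,z}" by auto
    then have ss2: "source_or_sink_in (mutate b j) {a,j,z,y} a" using ss by simp
    show ?thesis using 2 core_half[OF an d2 nz _ _ ss2 cpz cpy] by simp
  qed
qed


lemma card_two_frozen:
  assumes "finite V" "S \<subseteq> V" "card (S - M) \<le> 1" "u \<in> S" "v \<in> S" "u \<noteq> v"
  shows "u \<in> M \<or> v \<in> M"
proof (rule ccontr)
  assume "\<not> (u \<in> M \<or> v \<in> M)"
  then have "{u,v} \<subseteq> S - M" using assms by auto
  moreover have "finite (S - M)" using assms(1,2) finite_subset by blast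
  ultimately have "card {u,v} \<le> card (S - M)" by (rule card_mono[rotated])
  then show False using assms(3,6) by simp
qed

lemma card_sub_le:
  assumes "finite V" "S \<subseteq> V" "T \<subseteq> S" "card (S - M) \<le> 1"
  shows "card (T - M) \<le> 1"
proof -
  have "finite (S - M)" using assms(1,2) finite_subset by blast
  moreover have "T - M \<subseteq> S - M" using assms(3) by blast
  ultimately show ?thesis using card_mono assms(4) by (metis le_trans)
qed

lemma src_nc:
  assumes "\<forall>u v. B u v = - B v u" "B u v > 0" "B u w > 0"
  shows "\<not> cyc3 B u v w"
proof -
  have "B w u = - B u w" "B v u = - B u v" using assms(1) by metis+
  then show ?thesis using assms(2,3) unfolding cyc3_def by auto
qed

lemma sink_nc:
  assumes "\<forall>u v. B u v = - B v u" "B v u > 0" "B w u > 0"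
  shows "\<not> cyc3 B u v w"
proof -
  have "B u w = - B w u" "B u v = - B v u" using assms(1) by metis+
  then show ?thesis using assms(2,3) unfolding cyc3_def by auto
qed

lemma sign_cases:
  fixes s :: "'a \<Rightarrow> int"
  assumes an: "\<forall>u v. B u v = - B v u"
    and P: "\<And>u v. u \<in> {i,k,l} \<Longrightarrow> v \<in> {i,k,l} \<Longrightarrow> u \<noteq> v \<Longrightarrow>
        (s u < 0 \<and> s v > 0 \<longrightarrow> B u v > 0) \<and> ((s u > 0 \<and> s v > 0) \<or> (s u < 0 \<and> s v < 0) \<longrightarrow> B u v = b u v)"
    and nz: "s i \<noteq> 0" "s k \<noteq> 0" "s l \<noteq> 0"
    and d: "distinct [i,k,l]"
    and sv: "(s i > 0 \<and> s k > 0 \<and> s l > 0) \<or> (s i < 0 \<and> s k < 0 \<and> s l < 0) \<longrightarrow> \<not> cyc3 b i k l"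
    and c: "cyc3 B i k l"
  shows False
proof -
  have dd: "i \<noteq> k" "k \<noteq> l" "l \<noteq> i" "k \<noteq> i" "l \<noteq> k" "i \<noteq> l" using d by auto
  have ck: "cyc3 B k i l" using c cyc3_swap1 by metis
  have cl: "cyc3 B l i k" using c cyc3_swap1 cyc3_swap2 by metis
  have Pik: "(s i < 0 \<and> s k > 0 \<longrightarrow> B i k > 0) \<and> ((s i > 0 \<and> s k > 0) \<or> (s i < 0 \<and> s k < 0) \<longrightarrow> B i k = b i k)" using P[of i k] dd by simp
  have Pki: "(s k < 0 \<and> s i > 0 \<longrightarrow> B k i > 0) \<and> ((s k > 0 \<and> s i > 0) \<or> (s k < 0 \<and> s i < 0) \<longrightarrow> B k i = b k i)" using P[of k i] dd by simp
  have Pkl: "(s k < 0 \<and> s l > 0 \<longrightarrow> B k l > 0) \<and> ((s k > 0 \<and> s l > 0) \<or> (s k < 0 \<and> s l < 0) \<longrightarrow> B k l = b k l)" using P[of k l] dd by simp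
  have Plk: "(s l < 0 \<and> s k > 0 \<longrightarrow> B l k > 0) \<and> ((s l > 0 \<and> s k > 0) \<or> (s l < 0 \<and> s k < 0) \<longrightarrow> B l k = b l k)" using P[of l k] dd by simp
  have Pil: "(s i < 0 \<and> s l > 0 \<longrightarrow> B i l > 0) \<and> ((s i > 0 \<and> s l > 0) \<or> (s i < 0 \<and> s l < 0) \<longrightarrow> B i l = b i l)" using P[of i l] dd by simp
  have Pli: "(s l < 0 \<and> s i > 0 \<longrightarrow> B l i > 0) \<and> ((s l > 0 \<and> s i > 0) \<or> (s l < 0 \<and> s i < 0) \<longrightarrow> B l i = b l i)" using P[of l i] dd by simp
  consider "(s i > 0 \<and> s k > 0 \<and> s l > 0) \<or> (s i < 0 \<and> s k < 0 \<and> s l < 0)"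
    | "s i < 0 \<and> s k > 0 \<and> s l > 0" | "s i > 0 \<and> s k < 0 \<and> s l < 0"
    | "s k < 0 \<and> s i > 0 \<and> s l > 0" | "s k > 0 \<and> s i < 0 \<and> s l < 0"
    | "s l < 0 \<and> s i > 0 \<and> s k > 0" | "s l > 0 \<and> s i < 0 \<and> s k < 0"
    using nz by (cases "s i > 0"; cases "s k > 0"; cases "s l > 0") auto
  then show False
  proof cases
    case 1
    then have "B i k = b i k" "B k i = b k i" "B k l = b k l" "B l k = b l k" "B i l = b i l" "B l i = b l i"
      using Pik Pki Pkl Plk Pil Pli by blast+
    then have "cyc3 b i k l" using c unfolding cyc3_def by simp
    then show False using sv 1 by blast
  next
    case 2 then show False using src_nc[OF an, of i k l] Pik Pil c by auto
  next
    case 3 then show False using sink_nc[OF an, where u=i and v=k and w=l] Pki Pli c by auto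
  next
    case 4 then show False using src_nc[OF an, of k i l] Pki Pkl ck by auto
  next
    case 5 then show False using sink_nc[OF an, where u=k and v=i and w=l] Pik Plk ck by auto
  next
    case 6 then show False using src_nc[OF an, of l i k] Pli Plk cl by auto
  next
    case 7 then show False using sink_nc[OF an, where u=l and v=i and w=k] Pil Pkl cl by auto
  qed
qed

lemma claim1:
  assumes q: "quiver V M b" and cq: "complete_quiver V M b" and jM: "j \<in> M"
    and cp: "cycle_preserving V M b j" and nv: "\<not> is_vortex_apex V M b j"
    and o: "oriented_3cycle V M (mutate b j) i k l"
  shows "j \<in> {i,k,l}"
proof (rule ccontr)
  assume nj: "j \<notin> {i,k,l}"
  have an: "\<forall>u v. b u v = - b v u" and fin: "finite V" and MV: "M \<subseteq> V" using q unfolding quiver_def by blast+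
  have an': "\<forall>u v. mutate b j u v = - mutate b j v u" by (rule mut_anti[OF an])
  have d: "distinct [i,k,l]" and sub: "{i,k,l} \<subseteq> V" and cd: "card ({i,k,l} - M) \<le> 1"
    and na: "\<not> acyclic (arrows_on (mutate b j) {i,k,l})"
    using o unfolding oriented_3cycle_def by auto
  have cB: "cyc3 (mutate b j) i k l" using na cyc_iff[OF d an'] by simp
  have jV: "j \<in> V" using jM MV by auto
  have nzj: "b j u \<noteq> 0" if "u \<in> {i,k,l}" for u
    using cq jM jV sub that nj unfolding complete_quiver_def by auto
  have nzp: "b u v \<noteq> 0" if "u \<in> {i,k,l}" "v \<in> {i,k,l}" "u \<noteq> v" for u v
  proof -
    have "u \<in> M \<or> v \<in> M" using card_two_frozen[OF fin sub cd that] .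
    then show ?thesis using cq sub that unfolding complete_quiver_def by auto
  qed
  have cpr: "cyc3 b u j v \<longrightarrow> cyc3 (mutate b j) u j v" if "u \<in> {i,k,l}" "v \<in> {i,k,l}" "u \<noteq> v" for u v
  proof
    assume c: "cyc3 b u j v"
    have du: "distinct [u,j,v]" using that nj by auto
    have "card ({u,j,v} - M) \<le> 1"
    proof -
      have "{u,j,v} - M = {u,v} - M" using jM by auto
      moreover have "card ({u,v} - M) \<le> 1" using card_sub_le[OF fin sub _ cd] that by simp
      ultimately show ?thesis by simp
    qed
    then have "oriented_3cycle V M b u j v"
      unfolding oriented_3cycle_def using du c cyc_iff[OF du an] that sub jV by auto
    then have "oriented_3cycle V M (mutate b j) u j v" using cp unfolding cycle_preserving_def by auto
    then show "cyc3 (mutate b j) u j v" unfolding oriented_3cycle_def using cyc_iff[OF du an'] by auto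
  qed
  have pf: "(b j u < 0 \<and> b j v > 0 \<longrightarrow> mutate b j u v > 0)
       \<and> ((b j u > 0 \<and> b j v > 0) \<or> (b j u < 0 \<and> b j v < 0) \<longrightarrow> mutate b j u v = b u v)"
    if "u \<in> {i,k,l}" "v \<in> {i,k,l}" "u \<noteq> v" for u v
  proof (intro conjI impI)
    assume h: "b j u < 0 \<and> b j v > 0"
    have "b u j = - b j u" using an by metis
    then have "b u j > 0" using h by simp
    moreover have "distinct [u,j,v]" using that nj by auto
    ultimately show "mutate b j u v > 0"
      using pair_pos[OF an _ _ _ nzp[OF that] cpr[OF that]] h by simp
  next
    assume "(b j u > 0 \<and> b j v > 0) \<or> (b j u < 0 \<and> b j v < 0)"
    then show "mutate b j u v = b u v" using mut_same[OF an] that nj by auto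
  qed
  have nvx: "\<not> vortex_with_apex V M b j i k l" using nv unfolding is_vortex_apex_def by auto
  have "{j,i,k,l} - M = {i,k,l} - M" using jM by auto
  then have "\<not> (source_or_sink_in b {j,i,k,l} j \<and> \<not> acyclic (arrows_on b {i,k,l}))"
    using nvx d nj sub jV cd unfolding vortex_with_apex_def by auto
  moreover have "source_or_sink_in b {j,i,k,l} j" if "(b j i > 0 \<and> b j k > 0 \<and> b j l > 0) \<or> (b j i < 0 \<and> b j k < 0 \<and> b j l < 0)"
  proof -
    have "b j j = 0" using spec[OF spec[OF an, of j], of j] by simp
    moreover have "b i j = - b j i" "b k j = - b j k" "b l j = - b j l" using an by metis+
    ultimately show ?thesis using that unfolding source_or_sink_in_def by auto
  qed
  ultimately have sv: "(b j i > 0 \<and> b j k > 0 \<and> b j l > 0) \<or> (b j i < 0 \<and> b j k < 0 \<and> b j l < 0) \<longrightarrow> \<not> cyc3 b i k l"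
    using cyc_iff[OF d an] by blast
  have p1: "mutate b j k i = - mutate b j i k" "mutate b j l k = - mutate b j k l" "mutate b j i l = - mutate b j l i"
    using an' by metis+
  have p2: "b k i = - b i k" "b l k = - b k l" "b i l = - b l i"
    using an by metis+
  show False
    by (rule sign_cases[where s="\<lambda>u. b j u", OF an' pf _ _ _ d sv cB]) (use nzj in auto)
qed


lemma claim2:
  assumes q: "quiver V M b" and cq: "complete_quiver V M b" and jM: "j \<in> M"
    and cp: "cycle_preserving V M b j" and nv: "\<not> is_vortex_apex V M b j"
    and vx: "vortex_with_apex V M (mutate b j) a x y z"
  shows False
proof -
  have an: "\<forall>u v. b u v = - b v u" and fin: "finite V" and MV: "M \<subseteq> V" using q unfolding quiver_def by blast+
  have an': "\<forall>u v. mutate b j u v = - mutate b j v u" by (rule mut_anti[OF an])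
  have d: "distinct [a,x,y,z]" and sub: "{a,x,y,z} \<subseteq> V" and cd: "card ({a,x,y,z} - M) \<le> 1"
    and ss: "source_or_sink_in (mutate b j) {a,x,y,z} a"
    and na: "\<not> acyclic (arrows_on (mutate b j) {x,y,z})"
    using vx unfolding vortex_with_apex_def by auto
  have d3: "distinct [x,y,z]" using d by auto
  have cB: "cyc3 (mutate b j) x y z" using na cyc_iff[OF d3 an'] by simp
  have "card ({x,y,z} - M) \<le> 1" using card_sub_le[OF fin sub _ cd] by auto
  then have "oriented_3cycle V M (mutate b j) x y z"
    unfolding oriented_3cycle_def using d3 sub na by auto
  then have jin: "j \<in> {x,y,z}" using claim1[OF q cq jM cp nv] by blast
  have aj: "a \<noteq> j" using jin d by auto
  have jV: "j \<in> V" using jM MV by auto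
  have nz: "b j a \<noteq> 0" using cq jM sub aj jV unfolding complete_quiver_def by auto
  have cpr: "cyc3 b j a w \<longrightarrow> cyc3 (mutate b j) j a w" if "w \<in> {x,y,z}" "w \<noteq> j" for w
  proof
    assume c: "cyc3 b j a w"
    have du: "distinct [a,j,w]" using that aj d jin by auto
    have "card ({a,j,w} - M) \<le> 1" using card_sub_le[OF fin sub _ cd] that jin by auto
    moreover have "cyc3 b a j w" using c cyc3_swap1 by metis
    ultimately have "oriented_3cycle V M b a j w"
      unfolding oriented_3cycle_def using du cyc_iff[OF du an] that sub jV by auto
    then have "oriented_3cycle V M (mutate b j) a j w" using cp unfolding cycle_preserving_def by auto
    then have "cyc3 (mutate b j) a j w" unfolding oriented_3cycle_def using cyc_iff[OF du an'] by auto
    then show "cyc3 (mutate b j) j a w" using cyc3_swap1 by metis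
  qed
  from jin consider "j = x" | "j = y" | "j = z" by auto
  then show False
  proof cases
    case 1
    show False using core[OF an _ nz _ _ cpr[of y] cpr[of z]] 1 d cB ss by auto
  next
    case 2
    have "{a,y,x,z} = {a,x,y,z}" by auto
    moreover have "cyc3 (mutate b j) y x z" using cB cyc3_swap1 by metis
    ultimately show False using core[OF an _ nz _ _ cpr[of x] cpr[of z]] 2 d ss by auto
  next
    case 3
    have "{a,z,x,y} = {a,x,y,z}" by auto
    moreover have "cyc3 (mutate b j) z x y" using cB cyc3_swap1 cyc3_swap2 by metis
    ultimately show False using core[OF an _ nz _ _ cpr[of x] cpr[of y]] 3 d ss by auto
  qed
qed

theorem mainTheorem4:
  fixes V M :: "'a set" and b :: "'a \<Rightarrow> 'a \<Rightarrow> int" and j :: 'a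
  assumes "quiver V M b"
    and "complete_quiver V M b"
    and "j \<in> M"
    and "cycle_preserving V M b j"
    and "\<not> is_vortex_apex V M b j"
  shows "(\<forall>i k l. oriented_3cycle V M (mutate b j) i k l \<longrightarrow> j \<in> {i, k, l})
         \<and> vortex_free V M (mutate b j)"
  using claim1[OF assms] claim2[OF assms] unfolding vortex_free_def by blast

end
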